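(* Let $(G,L,v)$ be a reachable triple, $i\in L(v)$ a color, and $D$ a nonnegative integer. Then (1) if $\deg_G(v)=2$, then $P(G,L,v,i,D)\ge \frac1{13}$; (2) if $\deg_G(v)\le1$, then $P(G,L,v,i,D)\ge\frac16$.
   Context: Colors are $[4]=\{1,2,3,4\}$. A list-coloring instance $(G,L)$ is a finite simple graph $G=(V,E)$ with $L:V\to 2^{[4]}$. For a vertex $v$, $G_v$ is $G$ with $v$ and its incident edges removed, and $G_{v,w}=(G_v)_w$. If $v$ has neighbors $v_1,\dots,v_d$ (in a fixed order), then for $k\in[d]$ and a color $j$, $L_{k,j}$ is the list assignment on $G_v$ with $L_{k,j}(v_\ell)=L(v_\ell)\setminus\{j\}$ for $\ell<k$ and $L_{k,j}(u)=L(u)$ for all other vertices $u$ (so $L_{1,j}=L$). A triple $(G,L,v)$ with $v\in V$ is reachable if $\deg_G(u)\le3$ and $|L(u)|\ge\deg_G(u)+1$ for every $u\in V$, and moreover $\deg_G(v)\le2$ and $|L(v)|\ge\deg_G(v)+2$. The procedure $P(G,L,v,i,D)$ ($i\in[4]$, $D$ an integer) is defined recursively (empty products equal $1$): (a) If $i\notin L(v)$, return $0$. Otherwise, if $D\le 0$ or $\deg_G(v)=0$, return $1/|L(v)|$. (b) If $\deg_G(v)=1$ with neighbor $v_1$: let $x=P(G_v,L,v_1,i,D-1)$. If $|L(v)|=2$, say $L(v)=\{i,j\}$, let $y=P(G_v,L,v_1,j,D-1)$ and return $\frac{1-x}{2-x-y}$. If $|L(v)|=4$, return $\frac{1-x}{3}$.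 If $|L(v)|=3$, let $j$ be the unique color in $[4]\setminus L(v)$, $y=P(G_v,L,v_1,j,D-1)$, and return $\frac{1-x}{2+y}$. (c) If $\deg_G(v)=2$: order its neighbors $v_1,v_2$ so that $\deg_G(v_1)\ge\deg_G(v_2)$ and, if $\deg_G(v_1)=\deg_G(v_2)=1$, so that $i\notin L(v_1)$ implies $i\notin L(v_2)$. Let $u_1,\dots,u_{d_1}$ be the neighbors of $v_1$ in $G_v$ (fixed order) and for $k\in[d_1]$, $w\in[4]$ let $L'_{k,w}$ be the list assignment on $G_{v,v_1}$ with $L'_{k,w}(u_\ell)=L(u_\ell)\setminus\{w\}$ for $\ell<k$ and $L'_{k,w}(u)=L(u)$ otherwise. Set $x_{k,w}=P(G_{v,v_1},L'_{k,w},u_k,w,D-1)$ for $k\in[d_1]$, $w\in L(v_1)$. For $j\in L(v)$ set $f_j=0$ if $j\notin L(v_1)$ and otherwise $f_j=\frac{\prod_{k=1}^{d_1}(1-x_{k,j})}{\sum_{w\in L(v_1)}\prod_{k=1}^{d_1}(1-x_{k,w})}$, and set $y_j=P(G_v,L_{2,j},v_2,j,D-1)$. Return $\frac{(1-f_i)(1-y_i)}{\sum_{j\in L(v)}(1-f_j)(1-y_j)}$. (d) If $\deg_G(v)=3$ with neighbors $v_1,v_2,v_3$: for $j\in L(v)$ let $x_j=P(G_v,L_{1,j},v_1,j,D-1)$, $y_j=P(G_v,L_{2,j},v_2,j,D-1)$, $z_j=P(G_v,L_{3,j},v_3,j,D-1)$, and return $\frac{(1-x_i)(1-y_i)(1-z_i)}{\sum_{j\in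 L(v)}(1-x_j)(1-y_j)(1-z_j)}$. For reachable triples, all recursive calls are again on reachable triples and case (d) never occurs. *)

theory Defs
  imports Complex_Main
begin

text \<open>Graphs: a vertex set V and a symmetric irreflexive edge relation E (a set of
ordered pairs, both orientations present). Lists: L :: vertex => set of colors (nat).\<close>

definition nbrs :: "('a \<times> 'a) set \<Rightarrow> 'a \<Rightarrow> 'a set" where
  "nbrs E v = {u. (v, u) \<in> E}"

definition deg :: "('a \<times> 'a) set \<Rightarrow> 'a \<Rightarrow> nat" where
  "deg E v = card (nbrs E v)"

definition delE :: "('a \<times> 'a) set \<Rightarrow> 'a \<Rightarrow> ('a \<times> 'a) set" where
  "delE E v = {(a, b) \<in> E. a \<noteq> v \<and> b \<noteq> v}"

definition lrm :: "('a \<Rightarrow> nat set) \<Rightarrow> 'a set \<Rightarrow> nat \<Rightarrow> ('a \<Rightarrow> nat set)" where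
  "lrm L S w = (\<lambda>u. if u \<in> S then L u - {w} else L u)"

definition simple_graph :: "'a set \<Rightarrow> ('a \<times> 'a) set \<Rightarrow> bool" where
  "simple_graph V E \<longleftrightarrow> finite V \<and> E \<subseteq> V \<times> V \<and> sym E \<and> (\<forall>x. (x, x) \<notin> E)"

text \<open>The "fixed order" of neighbours is an arbitrary ordering oracle nb: for a graph
(V,E) and vertex v, nb V E v lists the neighbours of v, each exactly once.\<close>
definition nbr_order :: "('a set \<Rightarrow> ('a \<times> 'a) set \<Rightarrow> 'a \<Rightarrow> 'a list) \<Rightarrow> bool" where
  "nbr_order nb \<longleftrightarrow> (\<forall>V E v. simple_graph V E \<and> v \<in> V \<longrightarrow>
       distinct (nb V E v) \<and> set (nb V E v) = nbrs E v)"

definition reachable :: "'a set \<Rightarrow> ('a \<times> 'a) set \<Rightarrow> ('a \<Rightarrow> nat set) \<Rightarrow> 'a \<Rightarrow> bool" where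
  "reachable V E L v \<longleftrightarrow> simple_graph V E \<and> v \<in> V \<and>
     (\<forall>u\<in>V. L u \<subseteq> {1..4}) \<and>
     (\<forall>u\<in>V. deg E u \<le> 3 \<and> card (L u) \<ge> deg E u + 1) \<and>
     deg E v \<le> 2 \<and> card (L v) \<ge> deg E v + 2"

text \<open>The procedure P(G,L,v,i,D), G = (V,E), with D a nonnegative integer (D = 0 is the
case D \<le> 0). Unspecified (unreachable) branches return 0.\<close>
primrec P :: "('a set \<Rightarrow> ('a \<times> 'a) set \<Rightarrow> 'a \<Rightarrow> 'a list) \<Rightarrow> 'a set \<Rightarrow> ('a \<times> 'a) set
    \<Rightarrow> ('a \<Rightarrow> nat set) \<Rightarrow> 'a \<Rightarrow> nat \<Rightarrow> nat \<Rightarrow> real" where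
  "P nb V E L v i 0 = (if i \<notin> L v then 0 else 1 / real (card (L v)))"
| "P nb V E L v i (Suc n) =
    (if i \<notin> L v then 0
     else if deg E v = 0 then 1 / real (card (L v))
     else
       (let ns = nb V E v; V' = V - {v}; E' = delE E v in
        if deg E v = 1 then
          (let v1 = ns ! 0; x = P nb V' E' L v1 i n in
           if card (L v) = 2 then
             (let j = the_elem (L v - {i}); y = P nb V' E' L v1 j n in (1 - x) / (2 - x - y))
           else if card (L v) = 4 then (1 - x) / 3
           else if card (L v) = 3 then
             (let j = the_elem ({1..4} - L v); y = P nb V' E' L v1 j n in (1 - x) / (2 + y))
           else 0)
        else if deg E v = 2 then
          (let a = ns ! 0; b = ns ! 1;
               swap = (deg E a < deg E b \<or>
                       (deg E a = 1 \<and> deg E b = 1 \<and> i \<notin> L a \<and> i \<in> L b));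
               v1 = (if swap then b else a); v2 = (if swap then a else b);
               us = nb V' E' v1; V'' = V' - {v1}; E'' = delE E' v1;
               x = (\<lambda>k w. P nb V'' E'' (lrm L (set (take k us)) w) (us ! k) w n);
               g = (\<lambda>w. \<Prod>k<length us. 1 - x k w);
               f = (\<lambda>j. if j \<notin> L v1 then 0 else g j / (\<Sum>w\<in>L v1. g w));
               y = (\<lambda>j. P nb V' E' (lrm L {v1} j) v2 j n)
           in (1 - f i) * (1 - y i) / (\<Sum>j\<in>L v. (1 - f j) * (1 - y j)))
        else if deg E v = 3 then
          (let v1 = ns ! 0; v2 = ns ! 1; v3 = ns ! 2;
               x = (\<lambda>j. P nb V' E' L v1 j n);
               y = (\<lambda>j. P nb V' E' (lrm L {v1} j) v2 j n);
               z = (\<lambda>j. P nb V' E' (lrm L {v1, v2} j) v3 j n)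
           in (1 - x i) * (1 - y i) * (1 - z i) /
              (\<Sum>j\<in>L v. (1 - x j) * (1 - y j) * (1 - z j)))
        else 0))"

end

theory Submission
  imports Defs
begin

lemma nbrs_delE: "x \<noteq> v \<Longrightarrow> nbrs (delE E v) x = nbrs E x - {v}"
  by (auto simp: nbrs_def delE_def)

lemma lrm_empty: "lrm L {} w = L" by (simp add: lrm_def)

lemma reach_step:
  assumes R: "reachable V E L v" and S: "S \<subseteq> nbrs E v" and u: "u \<in> nbrs E v" "u \<notin> S"
  shows "reachable (V - {v}) (delE E v) (lrm L S w) u"
proof -
  from R have sg: "simple_graph V E" and vV: "v \<in> V" and Lsub: "\<forall>u\<in>V. L u \<subseteq> {1..4}"
    and dg: "\<forall>u\<in>V. deg E u \<le> 3 \<and> card (L u) \<ge> deg E u + 1" by (auto simp: reachable_def)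
  have fin: "finite V" "E \<subseteq> V \<times> V" "sym E" "\<forall>x. (x,x) \<notin> E" using sg by (auto simp: simple_graph_def)
  have nbV: "nbrs E x \<subseteq> V" for x using fin(2) by (auto simp: nbrs_def)
  have finnb: "finite (nbrs E x)" for x using nbV fin(1) finite_subset by blast
  have sg': "simple_graph (V - {v}) (delE E v)"
    using fin unfolding simple_graph_def delE_def sym_def by auto
  have uV: "u \<in> V - {v}" using u fin nbV by (auto simp: nbrs_def)
  have degle: "deg (delE E v) x \<le> deg E x" if "x \<noteq> v" for x
    unfolding deg_def using nbrs_delE[OF that] finnb by (simp add: card_mono)
  have degm: "deg (delE E v) x = deg E x - 1 \<and> deg E x \<ge> 1" if "x \<in> nbrs E v" for x
  proof -
    have "x \<noteq> v" using that fin(4) by (auto simp: nbrs_def)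
    moreover have vx: "v \<in> nbrs E x" using that fin(3) by (auto simp: nbrs_def sym_def)
    ultimately show ?thesis unfolding deg_def using nbrs_delE finnb
      by (metis One_nat_def Suc_leI card_Diff_singleton card_gt_0_iff empty_iff)
  qed
  have cr: "card (L x - {w}) + 1 \<ge> card (L x)" for x
    by (simp add: card_Diff_singleton_if, linarith)
  show ?thesis unfolding reachable_def
  proof (intro conjI ballI)
    show "simple_graph (V - {v}) (delE E v)" by (rule sg')
    show "u \<in> V - {v}" by (rule uV)
    fix x assume x: "x \<in> V - {v}"
    show "lrm L S w x \<subseteq> {1..4}" using Lsub x by (auto simp: lrm_def)
    show "deg (delE E v) x \<le> 3" using degle[of x] x dg by force
    show "deg (delE E v) x + 1 \<le> card (lrm L S w x)"
    proof (cases "x \<in> S")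
      case True
      have xn: "x \<in> nbrs E v" using True S by auto
      have "deg E x + 1 \<le> card (L x)" using dg x by auto
      then show ?thesis using degm[OF xn] cr[of x] True unfolding lrm_def by simp
    next
      case False
      then show ?thesis using degle[of x] dg x by (fastforce simp: lrm_def)
    qed
  next
    show "deg (delE E v) u \<le> 2" using degm[OF u(1)] dg uV by force
    show "deg (delE E v) u + 2 \<le> card (lrm L S w u)"
      using degm[OF u(1)] dg uV u(2) by (force simp: lrm_def)
  qed
qed

lemma Q:
  fixes f y :: "nat \<Rightarrow> real"
  assumes A: "finite A" "card A = 4" "i \<in> A"
    and f: "\<forall>j. 0 \<le> f j \<and> f j \<le> 1" and fs: "sum f A \<le> 1"
    and y: "\<forall>j\<in>A. 0 \<le> y j \<and> y j \<le> 1/2"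
  shows "0 \<le> (1 - f i) * (1 - y i) / (\<Sum>j\<in>A. (1 - f j) * (1 - y j)) \<and>
    (1 - f i) * (1 - y i) / (\<Sum>j\<in>A. (1 - f j) * (1 - y j)) \<le> 1/2 \<and>
    ((f i \<le> 1/2 \<or> (sum f A = 1 \<and> f i \<le> 4/7)) \<longrightarrow>
      1/13 \<le> (1 - f i) * (1 - y i) / (\<Sum>j\<in>A. (1 - f j) * (1 - y j)))"
proof -
  define N where "N = (1 - f i) * (1 - y i)"
  define M where "M = (\<Sum>j\<in>A-{i}. (1 - f j) * (1 - y j))"
  define F where "F = sum f (A - {i})"
  have sA: "(\<Sum>j\<in>A. (1 - f j) * (1 - y j)) = N + M" using A by (simp add: N_def M_def sum.remove)
  have fA: "sum f A = f i + F" using A by (simp add: F_def sum.remove)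
  have c3: "card (A - {i}) = 3" using A by simp
  have s1: "(\<Sum>j\<in>A-{i}. (1 - f j)) = 3 - F" using c3 by (simp add: sum_subtractf F_def)
  have "(\<Sum>j\<in>A-{i}. (1 - f j)/2) \<le> M" unfolding M_def
  proof (rule sum_mono)
    fix j assume "j \<in> A - {i}"
    then have "0 \<le> 1 - f j" "1/2 \<le> 1 - y j" using f y by auto
    then have "(1 - f j) * (1/2) \<le> (1 - f j) * (1 - y j)"
      using mult_left_mono[of "1/2" "1 - y j" "1 - f j"] by blast
    then show "(1 - f j)/2 \<le> (1 - f j) * (1 - y j)" by linarith
  qed
  then have Mlo: "(3 - F)/2 \<le> M" using s1 by (simp add: sum_divide_distrib[symmetric])
  have "M \<le> (\<Sum>j\<in>A-{i}. (1 - f j))" unfolding M_def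
  proof (rule sum_mono)
    fix j assume "j \<in> A - {i}"
    then have "0 \<le> 1 - f j" "1 - y j \<le> 1" using f y by auto
    then show "(1 - f j) * (1 - y j) \<le> 1 - f j"
      by (simp add: mult_left_le)
  qed
  then have Mhi: "M \<le> 3 - F" using s1 by simp
  have F0: "0 \<le> F" unfolding F_def using f by (simp add: sum_nonneg)
  have fi: "0 \<le> f i" "f i \<le> 1" using f by auto
  have yi: "0 \<le> y i" "y i \<le> 1/2" using y A by auto
  have "(1 - f i) * (1/2) \<le> (1 - f i) * (1 - y i)"
    by (rule mult_left_mono) (use fi yi in auto)
  then have Nlo: "(1 - f i)/2 \<le> N" unfolding N_def by linarith
  have Nhi: "N \<le> 1 - f i" unfolding N_def using fi yi by (simp add: mult_left_le)
  have Mlo2: "3 - F \<le> 2 * M" using Mlo by simp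
  have M1: "1 \<le> M" using Mlo2 fA fs fi by linarith
  have Nlo2: "1 - f i \<le> 2 * N" using Nlo by simp
  have pos: "0 < N + M" using M1 Nlo2 fi by linarith
  have r1: "0 \<le> N / (N + M)" using pos Nlo fi by simp
  have r2: "N / (N + M) \<le> 1/2" using pos Nhi M1 fi by (simp add: divide_simps)
  have r3: "1/13 \<le> N / (N + M)" if h: "f i \<le> 1/2 \<or> (sum f A = 1 \<and> f i \<le> 4/7)"
    using h
  proof
    assume "f i \<le> 1/2"
    then have "N + M \<le> 13 * N" using Nlo2 Mhi F0 by linarith
    then show ?thesis using pos by (simp add: divide_simps)
  next
    assume "sum f A = 1 \<and> f i \<le> 4/7"
    then have "N + M \<le> 13 * N" using Nlo2 Mhi fA by linarith
    then show ?thesis using pos by (simp add: divide_simps)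
  qed
  show ?thesis using r1 r2 r3 sA N_def by simp
qed

lemma fprops:
  fixes g f :: "nat \<Rightarrow> real"
  assumes B: "finite B" "B \<noteq> {}" and g: "\<forall>w\<in>B. c \<le> g w \<and> g w \<le> 1" and c: "c > 0"
    and fdef: "f = (\<lambda>j. if j \<notin> B then 0 else g j / sum g B)"
  shows "\<forall>j. 0 \<le> f j \<and> f j \<le> 1"
    and "finite A \<Longrightarrow> sum f A \<le> 1"
    and "finite A \<Longrightarrow> B \<subseteq> A \<Longrightarrow> sum f A = 1"
    and "i \<in> B \<Longrightarrow> f i \<le> 1 / (1 + (real (card B) - 1) * c)"
proof -
  have gn: "\<forall>w\<in>B. 0 \<le> g w"
  proof
    fix w assume "w \<in> B"
    then have "c \<le> g w" using g by blast
    then show "0 \<le> g w" using c by linarith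
  qed
  have Sg: "real (card B) * c \<le> sum g B"
    using sum_mono[of B "\<lambda>_. c" g] g by simp
  have cB: "card B \<ge> 1" using B by (simp add: Suc_leI card_gt_0_iff)
  have "(1::real) \<le> real (card B)" using cB by simp
  then have "1 * c \<le> real (card B) * c" using c by (intro mult_right_mono) auto
  then have Spos: "0 < sum g B" using Sg c by linarith
  show "\<forall>j. 0 \<le> f j \<and> f j \<le> 1"
  proof
    fix j
    show "0 \<le> f j \<and> f j \<le> 1"
    proof (cases "j \<in> B")
      case True
      have "g j \<le> sum g B" using member_le_sum[of j B g] True gn B by blast
      then show ?thesis using True Spos gn by (simp add: fdef)
    qed (simp add: fdef)
  qed
  have sAB: "sum f A = sum g (A \<inter> B) / sum g B" if A: "finite A" for A
  proof -
    have "sum f A = sum f (A \<inter> B)"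
      by (rule sum.mono_neutral_right) (use A fdef in auto)
    also have "\<dots> = sum (\<lambda>j. g j / sum g B) (A \<inter> B)"
      by (rule sum.cong) (auto simp: fdef)
    also have "\<dots> = sum g (A \<inter> B) / sum g B" by (simp add: sum_divide_distrib)
    finally show ?thesis .
  qed
  show "sum f A \<le> 1" if A: "finite A"
  proof -
    have "sum g (A \<inter> B) \<le> sum g B" by (rule sum_mono2) (use B gn in auto)
    then show ?thesis using sAB[OF A] Spos by simp
  qed
  show "sum f A = 1" if A: "finite A" and BA: "B \<subseteq> A"
  proof -
    have "A \<inter> B = B" using BA by auto
    then show ?thesis using sAB[OF A] Spos by simp
  qed
  show "f i \<le> 1 / (1 + (real (card B) - 1) * c)" if i: "i \<in> B"
  proof -
    define R where "R = sum g (B - {i})"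
    have SR: "sum g B = g i + R" unfolding R_def using B i by (simp add: sum.remove)
    have "real (card (B - {i})) * c \<le> R"
      using sum_mono[of "B - {i}" "\<lambda>_. c" g] g unfolding R_def by simp
    then have Rlo: "(real (card B) - 1) * c \<le> R" using i B cB by (simp add: of_nat_diff)
    have "(1::real) \<le> real (card B)" using cB by simp
    then have "0 \<le> (real (card B) - 1) * c" using c by simp
    then have R0: "0 \<le> R" using Rlo by linarith
    have "c \<le> g i" "g i \<le> 1" using g i by auto
    then have gi: "0 < g i" "g i \<le> 1" using c by linarith+
    have fi: "f i = g i / (g i + R)" using i SR by (simp add: fdef)
    have "g i / (g i + R) \<le> 1 / (1 + R)"
    proof -
      have "g i * R \<le> 1 * R" using gi R0 by (intro mult_right_mono) auto
      then have "g i * (1 + R) \<le> 1 * (g i + R)" by (simp add: algebra_simps)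
      then show ?thesis using gi R0 by (simp add: divide_simps)
    qed
    also have "\<dots> \<le> 1 / (1 + (real (card B) - 1) * c)"
    proof (rule divide_left_mono)
      show "1 + (real (card B) - 1) * c \<le> 1 + R" using Rlo by simp
      have "0 \<le> (real (card B) - 1) * c" using cB c by simp
      then show "0 < (1 + R) * (1 + (real (card B) - 1) * c)" using R0 by simp
    qed simp
    finally show ?thesis using fi by simp
  qed
qed

lemma reach_facts:
  assumes "reachable V E L v"
  shows "simple_graph V E" "v \<in> V" "L v \<subseteq> {1..4}" "deg E v \<le> 2" "card (L v) \<ge> deg E v + 2"
    "card (L v) \<le> 4" "finite (nbrs E v)"
proof -
  show sg: "simple_graph V E" "v \<in> V" "L v \<subseteq> {1..4}" "deg E v \<le> 2" "card (L v) \<ge> deg E v + 2"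
    using assms by (auto simp: reachable_def)
  show "card (L v) \<le> 4" using card_mono[OF _ sg(3)] by simp
  have "nbrs E v \<subseteq> V" using sg(1) by (auto simp: simple_graph_def nbrs_def)
  then show "finite (nbrs E v)" using sg(1) finite_subset by (auto simp: simple_graph_def)
qed

lemma distinct_nth_take: "distinct us \<Longrightarrow> k < length us \<Longrightarrow> us ! k \<notin> set (take k us)"
  by (auto simp: in_set_conv_nth nth_eq_iff_index_eq)

lemma inv_le1: "(t::real) \<ge> 1 \<Longrightarrow> 1/(1+t) \<le> 1/2" by (simp add: divide_simps)
lemma inv_le2: "(t::real) \<ge> 3/4 \<Longrightarrow> 1/(1+t) \<le> 4/7" by (simp add: divide_simps)

lemma bounds:
  assumes nb: "nbr_order nb"
  shows "reachable V E L v \<Longrightarrow> 0 \<le> P nb V E L v i D \<and> P nb V E L v i D \<le> 1/2 \<and>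
    (i \<in> L v \<longrightarrow> (deg E v = 2 \<longrightarrow> 1/13 \<le> P nb V E L v i D) \<and> (deg E v \<le> 1 \<longrightarrow> 1/6 \<le> P nb V E L v i D))"
proof (induction D arbitrary: V E L v i)
  case 0
  note rf = reach_facts[OF "0.prems"]
  have c: "2 \<le> real (card (L v))" "real (card (L v)) \<le> 4" using rf by linarith+
  show ?case
  proof (cases "i \<in> L v")
    case True
    then show ?thesis using c by (simp add: divide_simps)
  qed simp
next
  case (Suc n)
  have IH: "\<And>V E L v j. reachable V E L v \<Longrightarrow> 0 \<le> P nb V E L v j n \<and> P nb V E L v j n \<le> 1/2"
    using Suc.IH by blast
  note R = Suc.prems
  note rf = reach_facts[OF R]
  have nsP: "distinct (nb V E v) \<and> set (nb V E v) = nbrs E v"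
    using nb rf unfolding nbr_order_def by blast
  have len: "length (nb V E v) = deg E v"
    using nsP distinct_card unfolding deg_def by metis
  show ?case
  proof (cases "i \<in> L v")
    case False then show ?thesis by simp
  next
    case iL: True
    consider "deg E v = 0" | "deg E v = 1" | "deg E v = 2" using rf by linarith
    then show ?thesis
    proof cases
      case 1
      have c: "2 \<le> real (card (L v))" "real (card (L v)) \<le> 4" using rf by linarith+
      then show ?thesis using iL 1 by (simp add: divide_simps)
    next
      case 2
      define v1 where "v1 = nb V E v ! 0"
      have v1n: "v1 \<in> nbrs E v" using nsP len 2 unfolding v1_def by (metis nth_mem zero_less_one)
      have R1: "reachable (V - {v}) (delE E v) L v1"
        using reach_step[OF R, of "{}" v1 0] v1n unfolding lrm_empty by simp
      define x where "x = P nb (V - {v}) (delE E v) L v1 i n"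
      define y where "y = P nb (V - {v}) (delE E v) L v1 (the_elem ({1..4} - L v)) n"
      have xb: "0 \<le> x" "x \<le> 1/2" using IH[OF R1] unfolding x_def by auto
      have yb: "0 \<le> y" "y \<le> 1/2" using IH[OF R1] unfolding y_def by auto
      have c34: "card (L v) = 3 \<or> card (L v) = 4" using rf 2 by linarith
      have Peq: "P nb V E L v i (Suc n) = (if card (L v) = 4 then (1 - x)/3 else (1 - x)/(2 + y))"
        using iL 2 c34 by (auto simp: Let_def x_def y_def v1_def)
      show ?thesis
      proof (cases "card (L v) = 4")
        case True
        then show ?thesis unfolding Peq using xb 2 by simp
      next
        case False
        have "0 < 2 + y" using yb by simp
        then show ?thesis unfolding Peq using xb yb 2 False by (simp add: divide_simps)
      qed
    next
      case 3
      define ns where "ns = nb V E v"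
      define V' where "V' = V - {v}"
      define E' where "E' = delE E v"
      define a where "a = ns ! 0"
      define b where "b = ns ! 1"
      define swap where "swap = (deg E a < deg E b \<or>
                       (deg E a = 1 \<and> deg E b = 1 \<and> i \<notin> L a \<and> i \<in> L b))"
      define v1 where "v1 = (if swap then b else a)"
      define v2 where "v2 = (if swap then a else b)"
      define us where "us = nb V' E' v1"
      define V'' where "V'' = V' - {v1}"
      define E'' where "E'' = delE E' v1"
      define x where "x = (\<lambda>k w. P nb V'' E'' (lrm L (set (take k us)) w) (us ! k) w n)"
      define g where "g = (\<lambda>w. \<Prod>k<length us. 1 - x k w)"
      define f where "f = (\<lambda>j. if j \<notin> L v1 then 0 else g j / (\<Sum>w\<in>L v1. g w))"
      define y where "y = (\<lambda>j. P nb V' E' (lrm L {v1} j) v2 j n)"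
      have c1: "(i \<notin> L v) = False" "(deg E v = 0) = False" "(deg E v = 1) = False"
        "(deg E v = 2) = True" using iL 3 by auto
      have Peq: "P nb V E L v i (Suc n) = (1 - f i) * (1 - y i) / (\<Sum>j\<in>L v. (1 - f j) * (1 - y j))"
        unfolding P.simps(2)[of nb V E L v i n] Let_def c1 if_False if_True
        unfolding y_def f_def g_def x_def E''_def V''_def us_def v1_def v2_def swap_def a_def b_def
          E'_def V'_def ns_def
        by (rule refl)
      have ab: "a \<in> nbrs E v" "b \<in> nbrs E v" "a \<noteq> b"
        using nsP len 3 unfolding a_def b_def ns_def
        by (auto simp: nth_eq_iff_index_eq)
      have v12: "v1 \<in> nbrs E v" "v2 \<in> nbrs E v" "v1 \<noteq> v2"
        using ab unfolding v1_def v2_def by auto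
      have R1: "reachable V' E' L v1"
        using reach_step[OF R, of "{}" v1 0] v12 unfolding lrm_empty V'_def E'_def by simp
      have Ry: "reachable V' E' (lrm L {v1} j) v2" for j
        using reach_step[OF R, of "{v1}" v2 j] v12 unfolding V'_def E'_def by simp
      note rf1 = reach_facts[OF R1]
      have usP: "distinct us \<and> set us = nbrs E' v1"
        using nb rf1 unfolding nbr_order_def us_def by blast
      have lenus: "length us = deg E' v1"
        using usP distinct_card unfolding deg_def by metis
      have Rx: "reachable V'' E'' (lrm L (set (take k us)) w) (us ! k)" if k: "k < length us" for k w
        unfolding V''_def E''_def
      proof (rule reach_step[OF R1])
        show "set (take k us) \<subseteq> nbrs E' v1" using usP set_take_subset by metis
        show "us ! k \<in> nbrs E' v1" using usP k nth_mem by metis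
        show "us ! k \<notin> set (take k us)" using usP k distinct_nth_take by metis
      qed
      have xb: "0 \<le> x k w \<and> x k w \<le> 1/2" if "k < length us" for k w
        using IH[OF Rx[OF that]] unfolding x_def by blast
      have gb: "(1/2)^(length us) \<le> g w \<and> g w \<le> 1" for w
      proof
        have "(\<Prod>k<length us. (1/2::real)) \<le> (\<Prod>k<length us. 1 - x k w)"
          by (rule prod_mono) (use xb in auto)
        then show "(1/2)^(length us) \<le> g w" unfolding g_def by simp
        show "g w \<le> 1" unfolding g_def
        proof (rule prod_le_1)
          fix k assume "k \<in> {..<length us}"
          then have "0 \<le> x k w \<and> x k w \<le> 1/2" using xb by auto
          then show "0 \<le> 1 - x k w \<and> 1 - x k w \<le> 1" by linarith
        qed
      qed
      have L1: "finite (L v1)" "L v1 \<noteq> {}" "L v1 \<subseteq> {1..4}" "card (L v1) \<ge> length us + 2"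
        "length us \<le> 2"
        using rf1 lenus finite_subset[OF rf1(3)] by auto
      have fdef: "f = (\<lambda>j. if j \<notin> L v1 then 0 else g j / sum g (L v1))" unfolding f_def by simp
      note fp = fprops[OF L1(1) L1(2) _ _ fdef, of "(1/2)^(length us)"]
      have gb': "\<forall>w\<in>L v1. (1/2)^(length us) \<le> g w \<and> g w \<le> 1" using gb by blast
      have fp1: "\<forall>j. 0 \<le> f j \<and> f j \<le> 1" using fp(1) gb' by simp
      have fpA: "finite A \<Longrightarrow> sum f A \<le> 1" for A using fp(2) gb' by simp
      have fpE: "finite A \<Longrightarrow> L v1 \<subseteq> A \<Longrightarrow> sum f A = 1" for A using fp(3) gb' by simp
      have fpi: "i \<in> L v1 \<Longrightarrow> f i \<le> 1 / (1 + (real (card (L v1)) - 1) * (1/2)^(length us))"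
        using fp(4) gb' by simp
      have Lv: "L v = {1..4}" using rf 3 by (intro card_subset_eq) auto
      have finLv: "finite (L v)" "card (L v) = 4" using Lv by auto
      have yb: "\<forall>j\<in>L v. 0 \<le> y j \<and> y j \<le> 1/2" using IH[OF Ry] unfolding y_def by blast
      have cond: "f i \<le> 1/2 \<or> (sum f (L v) = 1 \<and> f i \<le> 4/7)"
      proof (cases "i \<in> L v1")
        case False
        then show ?thesis unfolding fdef by simp
      next
        case True
        have "length us = 0 \<or> length us = 1 \<or> length us = 2" using L1 by linarith
        then show ?thesis
        proof (elim disjE)
          assume h: "length us = 0"
          have "1 \<le> (real (card (L v1)) - 1) * (1/2)^(length us)" using L1 h by simp
          then have "1 / (1 + (real (card (L v1)) - 1) * (1/2)^(length us)) \<le> 1/2" by (rule inv_le1)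
          then show ?thesis using fpi[OF True] by linarith
        next
          assume h: "length us = 1"
          have "3 \<le> real (card (L v1))" using L1 h by linarith
          then have "1 \<le> (real (card (L v1)) - 1) * (1/2)^(length us)" using h by simp
          then have "1 / (1 + (real (card (L v1)) - 1) * (1/2)^(length us)) \<le> 1/2" by (rule inv_le1)
          then show ?thesis using fpi[OF True] by linarith
        next
          assume h: "length us = 2"
          have c4: "card (L v1) = 4" using L1 h card_mono[OF _ L1(3)] by simp
          then have "L v1 = {1..4}" using L1 by (intro card_subset_eq) auto
          then have s1: "sum f (L v) = 1" using fpE[OF finLv(1)] Lv by simp
          have "3/4 \<le> (real (card (L v1)) - 1) * (1/2)^(length us)" using h c4 by (simp add: power2_eq_square)
          then have "1 / (1 + (real (card (L v1)) - 1) * (1/2)^(length us)) \<le> 4/7" by (rule inv_le2)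
          then have "f i \<le> 4/7" using fpi[OF True] by linarith
          then show ?thesis using s1 by simp
        qed
      qed
      note QQ = Q[OF finLv(1) finLv(2) iL fp1 fpA[OF finLv(1)] yb]
      define RR where "RR = (1 - f i) * (1 - y i) / (\<Sum>j\<in>L v. (1 - f j) * (1 - y j))"
      have RRb: "0 \<le> RR" "RR \<le> 1/2" "1/13 \<le> RR"
        using QQ cond unfolding RR_def by blast+
      show ?thesis unfolding Peq RR_def[symmetric] using RRb 3 by auto
    qed
  qed
qed

theorem proposition8:
  fixes nb :: "'a set \<Rightarrow> ('a \<times> 'a) set \<Rightarrow> 'a \<Rightarrow> 'a list"
    and V :: "'a set" and E :: "('a \<times> 'a) set" and L :: "'a \<Rightarrow> nat set"
    and v :: 'a and i :: nat and D :: nat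
  assumes "nbr_order nb"
    and "reachable V E L v"
    and "i \<in> L v"
  shows "(deg E v = 2 \<longrightarrow> P nb V E L v i D \<ge> 1 / 13) \<and>
         (deg E v \<le> 1 \<longrightarrow> P nb V E L v i D \<ge> 1 / 6)"
  using bounds[OF assms(1) assms(2), of i D] assms(3) by simp

end
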